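(* Fix an integer $k\geq1$ and $V=\{0,\ldots,k\}$. If a Boolean function $\varphi$ on $V$ is fragmentable, then $\mathrm{eul}(\varphi)=0$.
   Context: A valuation is a subset $\nu\subseteq V$; $\nu^{(l)}$ is $\nu$ with membership of $l$ flipped. A Boolean function on $V$ is a map $\varphi:2^V\to\{\text{false},\text{true}\}$; $\mathrm{eul}(\varphi)=\sum_{\nu:\varphi(\nu)=\text{true}}(-1)^{|\nu|}$. $\varphi$ is degenerate if there is $l\in V$ with $\varphi(\nu)=\varphi(\nu^{(l)})$ for all $\nu$. Two functions are disjoint if no valuation satisfies both. A $\neg$-$\vee$-template is a Boolean circuit all of whose internal gates are $\neg$- or $\vee$-gates (a single leaf is allowed); its leaves $l_0,\ldots,l_n$ are holes. $T[\varphi_0,\ldots,\varphi_n]$ is the function obtained by substituting $\varphi_i$ for $l_i$; it is deterministic if, for every $\vee$-gate of the template, any two distinct inputs compute disjoint functions. $\varphi$ is fragmentable if there exist a $\neg$-$\vee$-template $T$ and degenerate functions $\varphi_0,\ldots,\varphi_n$ (one per hole) such that $T[\varphi_0,\ldots,\varphi_n]$ is deterministic and equivalent to $\varphi$. *)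

theory Defs
  imports Main
begin

type_synonym valuation = "nat set"
type_synonym boolfun = "nat set \<Rightarrow> bool"

definition flip :: "nat set \<Rightarrow> nat \<Rightarrow> nat set" where
  "flip \<nu> l = (if l \<in> \<nu> then \<nu> - {l} else insert l \<nu>)"

definition eul :: "nat set \<Rightarrow> boolfun \<Rightarrow> int" where
  "eul V \<phi> = (\<Sum>\<nu> \<in> {\<nu>. \<nu> \<subseteq> V \<and> \<phi> \<nu>}. (-1) ^ card \<nu>)"

definition degenerate :: "nat set \<Rightarrow> boolfun \<Rightarrow> bool" where
  "degenerate V \<phi> \<longleftrightarrow> (\<exists>l \<in> V. \<forall>\<nu>. \<nu> \<subseteq> V \<longrightarrow> \<phi> \<nu> = \<phi> (flip \<nu> l))"

definition disjoint_fun :: "nat set \<Rightarrow> boolfun \<Rightarrow> boolfun \<Rightarrow> bool" where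
  "disjoint_fun V \<phi> \<psi> \<longleftrightarrow> (\<forall>\<nu>. \<nu> \<subseteq> V \<longrightarrow> \<not> (\<phi> \<nu> \<and> \<psi> \<nu>))"

definition equiv_fun :: "nat set \<Rightarrow> boolfun \<Rightarrow> boolfun \<Rightarrow> bool" where
  "equiv_fun V \<phi> \<psi> \<longleftrightarrow> (\<forall>\<nu>. \<nu> \<subseteq> V \<longrightarrow> \<phi> \<nu> = \<psi> \<nu>)"

text \<open>Negation-disjunction templates (circuits unfolded into formula trees);
  holes are leaves labelled by an index; Or gates have arbitrary fan-in.\<close>
datatype template = Hole nat | Neg template | Or "template list"

fun subst :: "template \<Rightarrow> (nat \<Rightarrow> boolfun) \<Rightarrow> boolfun" where
  "subst (Hole i) \<Phi> = \<Phi> i"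
| "subst (Neg T) \<Phi> = (\<lambda>\<nu>. \<not> subst T \<Phi> \<nu>)"
| "subst (Or Ts) \<Phi> = (\<lambda>\<nu>. \<exists>T \<in> set Ts. subst T \<Phi> \<nu>)"

fun holes :: "template \<Rightarrow> nat set" where
  "holes (Hole i) = {i}"
| "holes (Neg T) = holes T"
| "holes (Or Ts) = (\<Union>T \<in> set Ts. holes T)"

fun deterministic :: "nat set \<Rightarrow> template \<Rightarrow> (nat \<Rightarrow> boolfun) \<Rightarrow> bool" where
  "deterministic V (Hole i) \<Phi> = True"
| "deterministic V (Neg T) \<Phi> = deterministic V T \<Phi>"
| "deterministic V (Or Ts) \<Phi> =
     ((\<forall>T \<in> set Ts. deterministic V T \<Phi>) \<and>
      (\<forall>i < length Ts. \<forall>j < length Ts. i \<noteq> j \<longrightarrow>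
          disjoint_fun V (subst (Ts ! i) \<Phi>) (subst (Ts ! j) \<Phi>)))"

definition fragmentable :: "nat set \<Rightarrow> boolfun \<Rightarrow> bool" where
  "fragmentable V \<phi> \<longleftrightarrow>
     (\<exists>T \<Phi>. (\<forall>i \<in> holes T. degenerate V (\<Phi> i)) \<and>
            deterministic V T \<Phi> \<and> equiv_fun V (subst T \<Phi>) \<phi>)"

end

theory Submission
  imports Defs
begin

lemma flip_subset: "\<nu> \<subseteq> V \<Longrightarrow> l \<in> V \<Longrightarrow> flip \<nu> l \<subseteq> V"
  by (auto simp: flip_def)

lemma flip_flip: "flip (flip \<nu> l) l = \<nu>"
  by (auto simp: flip_def)

lemma card_flip:
  assumes "finite \<nu>"
  shows "((-1::int) ^ card (flip \<nu> l)) = - ((-1) ^ card \<nu>)"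
proof (cases "l \<in> \<nu>")
  case True
  then have "card \<nu> = Suc (card (\<nu> - {l}))"
    using assms by (metis card_Suc_Diff1)
  then have "(-1::int) ^ card \<nu> = - ((-1) ^ card (\<nu> - {l}))" by simp
  then show ?thesis using True by (simp add: flip_def)
next
  case False
  then show ?thesis using assms by (simp add: flip_def)
qed

lemma eul_cong: "equiv_fun V \<phi> \<psi> \<Longrightarrow> eul V \<phi> = eul V \<psi>"
  unfolding eul_def equiv_fun_def
  by (rule arg_cong[where f="sum _"]) auto

lemma eul_degenerate:
  assumes fin: "finite V" and d: "degenerate V \<phi>"
  shows "eul V \<phi> = 0"
proof -
  obtain l where l: "l \<in> V" and h: "\<And>\<nu>. \<nu> \<subseteq> V \<Longrightarrow> \<phi> \<nu> = \<phi> (flip \<nu> l)"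
    using d unfolding degenerate_def by blast
  define S where "S = {\<nu>. \<nu> \<subseteq> V \<and> \<phi> \<nu>}"
  have bij: "bij_betw (\<lambda>\<nu>. flip \<nu> l) S S"
  proof (rule bij_betw_byWitness[where f'="\<lambda>\<nu>. flip \<nu> l"])
    show "(\<lambda>\<nu>. flip \<nu> l) ` S \<subseteq> S"
      using h l flip_subset unfolding S_def by blast
    show "(\<lambda>\<nu>. flip \<nu> l) ` S \<subseteq> S"
      using h l flip_subset unfolding S_def by blast
  qed (auto simp: flip_flip)
  have "(\<Sum>\<nu>\<in>S. (-1::int) ^ card \<nu>) = (\<Sum>\<nu>\<in>S. (-1) ^ card (flip \<nu> l))"
    using sum.reindex_bij_betw[OF bij, of "\<lambda>\<nu>. (-1::int) ^ card \<nu>"] by simp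
  also have "\<dots> = (\<Sum>\<nu>\<in>S. - ((-1) ^ card \<nu>))"
  proof (rule sum.cong)
    fix \<nu> assume "\<nu> \<in> S"
    then have "finite \<nu>" using fin finite_subset unfolding S_def by blast
    then show "(-1::int) ^ card (flip \<nu> l) = - ((-1) ^ card \<nu>)" by (rule card_flip)
  qed simp
  also have "\<dots> = - (\<Sum>\<nu>\<in>S. (-1) ^ card \<nu>)" by (simp add: sum_negf)
  finally show ?thesis unfolding eul_def S_def by simp
qed

lemma eul_true:
  assumes "finite V" "V \<noteq> {}"
  shows "eul V (\<lambda>_. True) = 0"
  using assms by (intro eul_degenerate) (auto simp: degenerate_def)

lemma eul_or:
  assumes fin: "finite V" and dj: "disjoint_fun V \<phi> \<psi>"
  shows "eul V (\<lambda>\<nu>. \<phi> \<nu> \<or> \<psi> \<nu>) = eul V \<phi> + eul V \<psi>"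
proof -
  have "{\<nu>. \<nu> \<subseteq> V \<and> (\<phi> \<nu> \<or> \<psi> \<nu>)} = {\<nu>. \<nu> \<subseteq> V \<and> \<phi> \<nu>} \<union> {\<nu>. \<nu> \<subseteq> V \<and> \<psi> \<nu>}" by auto
  moreover have "finite {\<nu>. \<nu> \<subseteq> V \<and> \<phi> \<nu>}" "finite {\<nu>. \<nu> \<subseteq> V \<and> \<psi> \<nu>}"
    using fin by auto
  moreover have "{\<nu>. \<nu> \<subseteq> V \<and> \<phi> \<nu>} \<inter> {\<nu>. \<nu> \<subseteq> V \<and> \<psi> \<nu>} = {}"
    using dj unfolding disjoint_fun_def by auto
  ultimately show ?thesis unfolding eul_def by (simp add: sum.union_disjoint)
qed

lemma eul_neg:
  assumes fin: "finite V"
  shows "eul V (\<lambda>\<nu>. \<not> \<phi> \<nu>) = eul V (\<lambda>_. True) - eul V \<phi>"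
proof -
  have "eul V (\<lambda>\<nu>. \<phi> \<nu> \<or> \<not> \<phi> \<nu>) = eul V \<phi> + eul V (\<lambda>\<nu>. \<not> \<phi> \<nu>)"
    using fin by (intro eul_or) (auto simp: disjoint_fun_def)
  then show ?thesis by simp
qed

lemma main:
  assumes fin: "finite V" and ne: "V \<noteq> {}"
  shows "(\<forall>i\<in>holes T. degenerate V (\<Phi> i)) \<Longrightarrow> deterministic V T \<Phi> \<Longrightarrow> eul V (subst T \<Phi>) = 0"
proof (induction T)
  case (Hole x)
  then show ?case using eul_degenerate[OF fin] by simp
next
  case (Neg T)
  then show ?case using eul_neg[OF fin] eul_true[OF fin ne] by simp
next
  case (Or Ts)
  then show ?case
  proof (induction Ts)
    case Nil
    then show ?case by (simp add: eul_def)
  next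
    case (Cons T Ts)
    have dT: "deterministic V T \<Phi>" using Cons.prems(3) by simp
    have hT: "\<forall>i\<in>holes T. degenerate V (\<Phi> i)" using Cons.prems(2) by simp
    have e1: "eul V (subst T \<Phi>) = 0" using Cons.prems(1) dT hT by simp
    have dTs: "deterministic V (Or Ts) \<Phi>"
    proof -
      have "\<forall>i < length Ts. \<forall>j < length Ts. i \<noteq> j \<longrightarrow>
          disjoint_fun V (subst (Ts ! i) \<Phi>) (subst (Ts ! j) \<Phi>)"
      proof (intro allI impI)
        fix i j assume "i < length Ts" "j < length Ts" "i \<noteq> j"
        then show "disjoint_fun V (subst (Ts ! i) \<Phi>) (subst (Ts ! j) \<Phi>)"
        proof -
          have "\<forall>i<Suc (length Ts). \<forall>j<Suc (length Ts). i \<noteq> j \<longrightarrow>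
            disjoint_fun V (subst ((T # Ts) ! i) \<Phi>) (subst ((T # Ts) ! j) \<Phi>)"
            using Cons.prems(3) by simp
          then have "disjoint_fun V (subst ((T # Ts) ! Suc i) \<Phi>) (subst ((T # Ts) ! Suc j) \<Phi>)"
            using \<open>i < length Ts\<close> \<open>j < length Ts\<close> \<open>i \<noteq> j\<close> by blast
          then show ?thesis by simp
        qed
      qed
      then show ?thesis using Cons.prems(3) by simp
    qed
    have e2: "eul V (subst (Or Ts) \<Phi>) = 0"
      using Cons.IH Cons.prems dTs by simp
    have dj: "disjoint_fun V (subst T \<Phi>) (subst (Or Ts) \<Phi>)"
      unfolding disjoint_fun_def
    proof (intro allI impI notI)
      fix \<nu> assume v: "\<nu> \<subseteq> V" and c: "subst T \<Phi> \<nu> \<and> subst (Or Ts) \<Phi> \<nu>"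
      then obtain T' where "T' \<in> set Ts" "subst T' \<Phi> \<nu>" by auto
      then obtain j where j: "j < length Ts" "Ts ! j = T'" by (auto simp: in_set_conv_nth)
      have "disjoint_fun V (subst ((T#Ts) ! 0) \<Phi>) (subst ((T#Ts) ! Suc j) \<Phi>)"
      proof -
        have "\<forall>i<Suc (length Ts). \<forall>j<Suc (length Ts). i \<noteq> j \<longrightarrow>
          disjoint_fun V (subst ((T # Ts) ! i) \<Phi>) (subst ((T # Ts) ! j) \<Phi>)"
          using Cons.prems(3) by simp
        then show ?thesis using j(1) by blast
      qed
      then show False using v c j \<open>subst T' \<Phi> \<nu>\<close> by (simp add: disjoint_fun_def)
    qed
    have "subst (Or (T#Ts)) \<Phi> = (\<lambda>\<nu>. subst T \<Phi> \<nu> \<or> subst (Or Ts) \<Phi> \<nu>)" by auto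
    then show ?case using eul_or[OF fin dj] e1 e2 by simp
  qed
qed

theorem proposition4p6:
  fixes k :: nat and \<phi> :: boolfun
  assumes "k \<ge> 1"
    and "fragmentable {0..k} \<phi>"
  shows "eul {0..k} \<phi> = 0"
proof -
  obtain T \<Phi> where "\<forall>i \<in> holes T. degenerate {0..k} (\<Phi> i)" "deterministic {0..k} T \<Phi>"
    "equiv_fun {0..k} (subst T \<Phi>) \<phi>"
    using assms(2) unfolding fragmentable_def by blast
  moreover have "eul {0..k} (subst T \<Phi>) = 0"
    using main[of "{0..k}"] calculation by auto
  ultimately show ?thesis using eul_cong by metis
qed

end
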